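(* Let $A$ be an archimedean $*$-algebra, $x\in A_+$, and $\bar x$ its image in $C^*(A)$. Then $\bar x$ is invertible in $C^*(A)$ if and only if there exists a positive rational $\alpha$ with $x-\alpha\in A_+$.
   Context: A $*$-algebra is a unital algebra over $\mathbb{Q}$ with a $\mathbb{Q}$-linear involution $x\mapsto x^*$ satisfying $(xy)^*=y^*x^*$; rational scalars are identified with multiples of the unit. $A_+=\{\sum_{i=1}^n x_i^*x_i: n\in\mathbb{N},x_i\in A\}$, and $x\leq y$ means $y-x\in A_+$. For $x\in A$, $\|x\|=\sqrt{\inf\{\alpha\in\mathbb{Q}_{>0}: x^*x\leq\alpha\}}\in[0,\infty]$; $A_i=\{x:\|x\|=0\}$. $A$ is archimedean if $-1\notin A_+$ and $\|x\|<\infty$ for all $x$. $C^*(A)=\mathbb{C}\otimes_{\mathbb{R}}C^*_{\mathbb{R}}(A)$, where $C^*_{\mathbb{R}}(A)$ is the completion of $A/A_i$ with respect to the norm induced by $\|\cdot\|$. *)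

theory Defs
  imports Complex_Main "HOL-Library.Extended_Real"
begin

text \<open>The rational alpha is identified with sm alpha 1.\<close>

definition star_alg :: "(rat \<Rightarrow> 'a::ring_1 \<Rightarrow> 'a) \<Rightarrow> ('a \<Rightarrow> 'a) \<Rightarrow> bool" where
  "star_alg sm st \<longleftrightarrow>
     (\<forall>a x y. sm a (x + y) = sm a x + sm a y) \<and>
     (\<forall>a b x. sm (a + b) x = sm a x + sm b x) \<and>
     (\<forall>a b x. sm (a * b) x = sm a (sm b x)) \<and>
     (\<forall>x. sm 1 x = x) \<and>
     (\<forall>a x y. sm a (x * y) = sm a x * y) \<and>
     (\<forall>a x y. sm a (x * y) = x * sm a y) \<and>
     (\<forall>x y. st (x + y) = st x + st y) \<and>
     (\<forall>a x. st (sm a x) = sm a (st x)) \<and>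
     (\<forall>x. st (st x) = x) \<and>
     (\<forall>x y. st (x * y) = st y * st x)"

definition sa_pos :: "('a \<Rightarrow> 'a) \<Rightarrow> 'a::ring_1 \<Rightarrow> bool" where
  "sa_pos st x \<longleftrightarrow> (\<exists>xs :: 'a list. x = sum_list (map (\<lambda>y. st y * y) xs))"

definition sa_le :: "('a \<Rightarrow> 'a) \<Rightarrow> 'a::ring_1 \<Rightarrow> 'a \<Rightarrow> bool" where
  "sa_le st x y \<longleftrightarrow> sa_pos st (y - x)"

definition sa_normsq :: "(rat \<Rightarrow> 'a \<Rightarrow> 'a) \<Rightarrow> ('a \<Rightarrow> 'a) \<Rightarrow> 'a::ring_1 \<Rightarrow> ereal" where
  "sa_normsq sm st x = Inf {ereal (real_of_rat \<alpha>) | \<alpha>. \<alpha> > 0 \<and> sa_le st (st x * x) (sm \<alpha> 1)}"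

definition sa_archimedean :: "(rat \<Rightarrow> 'a::ring_1 \<Rightarrow> 'a) \<Rightarrow> ('a \<Rightarrow> 'a) \<Rightarrow> bool" where
  "sa_archimedean sm st \<longleftrightarrow> \<not> sa_pos st (-(1::'a)) \<and> (\<forall>x::'a. sa_normsq sm st x < \<infinity>)"

text \<open>The norm ||x|| (as a real number; it is finite for archimedean A, which is
  the only situation in which it is used below).\<close>
definition sa_norm :: "(rat \<Rightarrow> 'a \<Rightarrow> 'a) \<Rightarrow> ('a \<Rightarrow> 'a) \<Rightarrow> 'a::ring_1 \<Rightarrow> real" where
  "sa_norm sm st x = sqrt (real_of_ereal (sa_normsq sm st x))"

text \<open>Cauchy sequences in A w.r.t. the (semi)norm: representatives of elements of
  C^*_R(A), the completion of A/A_i.\<close>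
definition sa_cauchy :: "(rat \<Rightarrow> 'a \<Rightarrow> 'a) \<Rightarrow> ('a \<Rightarrow> 'a) \<Rightarrow> (nat \<Rightarrow> 'a::ring_1) \<Rightarrow> bool" where
  "sa_cauchy sm st u \<longleftrightarrow>
     (\<forall>e>0. \<exists>N. \<forall>m\<ge>N. \<forall>n\<ge>N. sa_norm sm st (u m - u n) < e)"

text \<open>Invertibility of the image of x in C^*(A) = C \<otimes>_R C^*_R(A), unfolded:
  an element of C^*(A) is a + i b with a, b in C^*_R(A), represented by Cauchy
  sequences; the image of x is [const x] + i 0, the unit is [const 1] + i 0;
  products are computed termwise, and two classes agree iff the norm of the
  difference of representatives tends to 0. So x-bar is invertible iff there
  are a, b in C^*_R(A) with x a = 1, x b = 0, a x = 1, b x = 0.\<close>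
definition cstar_invertible :: "(rat \<Rightarrow> 'a \<Rightarrow> 'a) \<Rightarrow> ('a \<Rightarrow> 'a) \<Rightarrow> 'a::ring_1 \<Rightarrow> bool" where
  "cstar_invertible sm st x \<longleftrightarrow>
     (\<exists>a b :: nat \<Rightarrow> 'a. sa_cauchy sm st a \<and> sa_cauchy sm st b \<and>
        (\<lambda>n. sa_norm sm st (x * a n - 1)) \<longlonglongrightarrow> 0 \<and>
        (\<lambda>n. sa_norm sm st (a n * x - 1)) \<longlonglongrightarrow> 0 \<and>
        (\<lambda>n. sa_norm sm st (x * b n)) \<longlonglongrightarrow> 0 \<and>
        (\<lambda>n. sa_norm sm st (b n * x)) \<longlonglongrightarrow> 0)"

end

theory Submission imports Defs begin

context
  fixes sm :: "rat \<Rightarrow> 'a::ring_1 \<Rightarrow> 'a" and st :: "'a \<Rightarrow> 'a"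
  assumes SA: "star_alg sm st"
begin

lemma sm_add: "sm a (x+y) = sm a x + sm a y" using SA unfolding star_alg_def by simp
lemma sm_add2: "sm (a+b) x = sm a x + sm b x" using SA unfolding star_alg_def by simp
lemma sm_mult: "sm (a*b) x = sm a (sm b x)" using SA unfolding star_alg_def by simp
lemma sm_1: "sm 1 x = x" using SA unfolding star_alg_def by simp
lemma sm_ml: "sm a (x*y) = sm a x * y" using SA unfolding star_alg_def by simp
lemma sm_mr: "sm a (x*y) = x * sm a y" using SA unfolding star_alg_def by (elim conjE) (drule spec)+
lemma st_add: "st (x+y) = st x + st y" using SA unfolding star_alg_def by simp
lemma st_sm: "st (sm a x) = sm a (st x)" using SA unfolding star_alg_def by simp
lemma st_st: "st (st x) = x" using SA unfolding star_alg_def by simp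
lemma st_mult: "st (x*y) = st y * st x" using SA unfolding star_alg_def by simp

lemma sm_0x: "sm 0 x = 0" using sm_add2[of 0 0 x] by simp
lemma sm_a0: "sm a 0 = 0" using sm_add[of a 0 0] by simp
lemma sm_neg: "sm a (-x) = - sm a x" using sm_add[of a x "-x"] sm_a0 by (metis add.commute neg_eq_iff_add_eq_0)
lemma sm_diff: "sm a (x-y) = sm a x - sm a y" using sm_add[of a x "-y"] sm_neg by simp
lemma sm_neg2: "sm (-a) x = - sm a x" using sm_add2[of a "-a" x] sm_0x by (metis add.commute neg_eq_iff_add_eq_0)
lemma sm_diff2: "sm (a-b) x = sm a x - sm b x" using sm_add2[of a "-b" x] sm_neg2 by simp
lemma st_0: "st 0 = 0" using st_add[of 0 0] by simp
lemma st_neg: "st (-x) = - st x" using st_add[of x "-x"] st_0 by (metis add.commute neg_eq_iff_add_eq_0)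
lemma st_diff: "st (x-y) = st x - st y" using st_add[of x "-y"] st_neg by simp
lemma st_1: "st 1 = 1"
proof -
  have "st (st 1 * 1) = st 1 * st (st 1)" by (rule st_mult)
  then show ?thesis using st_st by simp
qed
lemma sm_l: "sm a x = sm a 1 * x" using sm_ml[of a 1 x] by simp
lemma sm_r: "sm a x = x * sm a 1" using sm_mr[of a x 1] by simp
lemma sm_comm: "sm a 1 * x = x * sm a 1" using sm_l sm_r by metis
lemma st_c: "st (sm a 1) = sm a 1" using st_sm st_1 by simp
lemma sm_nat: "sm (of_nat n) x = of_nat n * x"
  by (induction n) (simp_all add: sm_0x sm_add2 sm_1 distrib_right)

lemma sum_list_st: "st (sum_list xs) = sum_list (map st xs)"
  by (induction xs) (simp_all add: st_0 st_add)

lemma pos_herm: "sa_pos st p \<Longrightarrow> st p = p"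
  unfolding sa_pos_def by (auto simp: sum_list_st o_def st_mult st_st)

lemma pos_0: "sa_pos st 0" unfolding sa_pos_def by (rule exI[of _ "[]"]) simp
lemma pos_sq: "sa_pos st (st z * z)" unfolding sa_pos_def by (rule exI[of _ "[z]"]) simp
lemma pos_add: "sa_pos st p \<Longrightarrow> sa_pos st q \<Longrightarrow> sa_pos st (p + q)"
  unfolding sa_pos_def by (metis map_append sum_list_append)

lemma pos_cong: assumes "sa_pos st p" shows "sa_pos st (st z * p * z)"
proof -
  obtain xs where p: "p = sum_list (map (\<lambda>y. st y * y) xs)" using assms sa_pos_def by blast
  have "st z * p * z = sum_list (map (\<lambda>y. st y * y) (map (\<lambda>y. y * z) xs))"
    unfolding p by (induction xs) (simp_all add: st_mult algebra_simps)
  then show ?thesis unfolding sa_pos_def by blast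
qed

lemma pos_sm_sq: assumes "r \<ge> 0" shows "sa_pos st (sm r (st y * y))"
proof -
  obtain p q where pq: "quotient_of r = (p, q)" by (cases "quotient_of r")
  have r: "r = of_int p / of_int q" and q: "q > 0" using pq quotient_of_div quotient_of_denom_pos by blast+
  have p0: "p \<ge> 0" using assms r q by (simp add: zero_le_divide_iff)
  define n where "n = nat (p*q)"
  have rn: "r = of_nat n * (1/of_int q * (1/of_int q))" using r q p0 by (simp add: n_def field_simps)
  define u where "u = sm (1/of_int q) y"
  have "st u * u = sm (1/of_int q * (1/of_int q)) (st y * y)"
    unfolding u_def st_sm sm_mult by (metis sm_ml sm_mr)
  then have "sm r (st y * y) = of_nat n * (st u * u)" unfolding rn sm_mult sm_nat by simp
  also have "\<dots> = sum_list (map (\<lambda>y. st y * y) (replicate n u))" by (simp add: sum_list_replicate)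
  finally show ?thesis unfolding sa_pos_def by blast
qed

lemma pos_sm: assumes "sa_pos st p" "r \<ge> 0" shows "sa_pos st (sm r p)"
proof -
  obtain xs where p: "p = sum_list (map (\<lambda>y. st y * y) xs)" using assms sa_pos_def by blast
  show ?thesis unfolding p
    by (induction xs) (simp_all add: sm_a0 pos_0 sm_add pos_add pos_sm_sq assms)
qed

lemma pos_c: "r \<ge> 0 \<Longrightarrow> sa_pos st (sm r 1)"
  using pos_sm_sq[of r 1] st_1 by simp


lemma sm_inv: "g \<noteq> 0 \<Longrightarrow> sm (1/g) (sm g w) = w"
  by (simp add: sm_mult[symmetric] sm_1)

lemma pos_trick: assumes y: "sa_pos st y" and q: "sa_pos st (sm g 1 - y)" and g: "g > 0"
  shows "sa_pos st (y * (sm g 1 - y))"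
proof -
  define c where "c = sm g 1"
  have hy: "st y = y" using pos_herm y by blast
  have hq: "st (c - y) = c - y" using pos_herm q c_def by blast
  have comm: "y * (c - y) = (c - y) * y" using sm_comm[of g y] by (simp add: c_def algebra_simps)
  have A: "sa_pos st ((c - y) * y * (c - y))" using pos_cong[OF y, of "c - y"] hq by simp
  have B: "sa_pos st (y * (c - y) * y)" using pos_cong[OF q, of y] hy c_def by simp
  have "(c - y) * y * (c - y) + y * (c - y) * y = y * (c - y) * ((c - y) + y)"
    using comm by (simp add: algebra_simps)
  also have "\<dots> = sm g (y * (c - y))" by (simp add: c_def sm_r[of g "y * (sm g 1 - y)"])
  finally have "sa_pos st (sm g (y * (c - y)))" using pos_add[OF A B] by simp
  then have "sa_pos st (sm (1/g) (sm g (y * (c - y))))" using pos_sm g by simp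
  then show ?thesis using sm_inv g c_def by simp
qed

lemma normsq_le: "g > 0 \<Longrightarrow> sa_pos st (sm g 1 - st z * z) \<Longrightarrow> sa_normsq sm st z \<le> ereal (real_of_rat g)"
  unfolding sa_normsq_def sa_le_def by (rule Inf_lower) blast

lemma normsq_ge0: "0 \<le> sa_normsq sm st z"
  unfolding sa_normsq_def by (rule Inf_greatest) auto

lemma norm_le: assumes "g > 0" "sa_pos st (sm g 1 - st z * z)"
  shows "sa_norm sm st z \<le> sqrt (real_of_rat g)"
proof -
  have a: "sa_normsq sm st z \<le> ereal (real_of_rat g)" using normsq_le assms by blast
  have b: "0 \<le> sa_normsq sm st z" by (rule normsq_ge0)
  from a b obtain t where t: "sa_normsq sm st z = ereal t" "t \<le> real_of_rat g"
    by (cases "sa_normsq sm st z") auto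
  then show ?thesis unfolding sa_norm_def by simp
qed

lemma norm_pos_bound: assumes z: "sa_pos st z" and r: "r > 0" and q: "sa_pos st (sm r 1 - z)"
  shows "sa_norm sm st z \<le> real_of_rat r"
proof -
  have hz: "st z = z" using pos_herm z by blast
  have A: "sa_pos st (z * (sm r 1 - z))" using pos_trick z q r by blast
  have B: "sa_pos st (sm r (sm r 1 - z))" using pos_sm q r by simp
  have "z * (sm r 1 - z) + sm r (sm r 1 - z) = sm (r*r) 1 - st z * z"
    by (simp add: hz sm_diff sm_mult algebra_simps sm_r[of r z, symmetric])
  then have "sa_pos st (sm (r*r) 1 - st z * z)" using pos_add[OF A B] by simp
  then have "sa_norm sm st z \<le> sqrt (real_of_rat (r*r))" using norm_le r by simp
  also have "\<dots> = real_of_rat r" using r by (simp add: of_rat_mult)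
  finally show ?thesis .
qed

lemma norm_neg: "sa_norm sm st (-z) = sa_norm sm st z"
  unfolding sa_norm_def sa_normsq_def by (simp add: st_neg)

lemma norm_ge0: "sa_norm sm st z \<ge> 0"
  unfolding sa_norm_def using normsq_ge0[of z] real_of_ereal_pos by simp

lemma small_norm: assumes arch: "sa_archimedean sm st" and n: "sa_norm sm st z < 1/2"
  shows "\<exists>c>0. c < 1/4 \<and> sa_pos st (sm c 1 - st z * z)"
proof -
  have fin: "sa_normsq sm st z < \<infinity>" using arch sa_archimedean_def by blast
  obtain t where t: "sa_normsq sm st z = ereal t" "t \<ge> 0"
    using fin normsq_ge0[of z] by (cases "sa_normsq sm st z") auto
  have "sqrt t < 1/2" using n t unfolding sa_norm_def by simp
  then have "sqrt t * sqrt t < 1/2 * 1/2" using t(2)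
    by (metis mult_strict_mono real_sqrt_ge_zero times_divide_eq_right zero_less_divide_1_iff zero_less_numeral)
  then have "t < 1/4" using t(2) by simp
  then have "sa_normsq sm st z < ereal (1/4)" using t by simp
  then obtain e where "e \<in> {ereal (real_of_rat \<alpha>) | \<alpha>. \<alpha> > 0 \<and> sa_le st (st z * z) (sm \<alpha> 1)}" "e < ereal (1/4)"
    unfolding sa_normsq_def Inf_less_iff by blast
  then obtain c where "c > 0" "sa_pos st (sm c 1 - st z * z)" "real_of_rat c < 1/4"
    unfolding sa_le_def by auto
  moreover have "c < 1/4" using \<open>real_of_rat c < 1/4\<close>
    by (metis of_rat_less of_rat_divide of_rat_1 of_rat_numeral_eq)
  ultimately show ?thesis by blast
qed

lemma fin_bound: assumes arch: "sa_archimedean sm st"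
  shows "\<exists>K>0. sa_pos st (sm K 1 - st z * z)"
proof -
  have fin: "sa_normsq sm st z < \<infinity>" using arch sa_archimedean_def by blast
  have "{ereal (real_of_rat \<alpha>) | \<alpha>. \<alpha> > 0 \<and> sa_le st (st z * z) (sm \<alpha> 1)} \<noteq> {}"
  proof
    assume "{ereal (real_of_rat \<alpha>) | \<alpha>. \<alpha> > 0 \<and> sa_le st (st z * z) (sm \<alpha> 1)} = {}"
    then have "sa_normsq sm st z = Inf {}" by (simp only: sa_normsq_def)
    then have "sa_normsq sm st z = \<infinity>" by (simp add: top_ereal_def)
    then show False using fin by simp
  qed
  then show ?thesis unfolding sa_le_def by auto
qed


lemma pos_scale_back: "g > 0 \<Longrightarrow> sa_pos st (sm g w) \<Longrightarrow> sa_pos st w"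
  using pos_sm[of "sm g w" "1/g"] sm_inv[of g w] by simp

lemma fwd: assumes arch: "sa_archimedean sm st" and xp: "sa_pos st x"
  and inv: "cstar_invertible sm st x"
  shows "\<exists>\<alpha>::rat. \<alpha> > 0 \<and> sa_pos st (x - sm \<alpha> 1)"
proof -
  obtain a where lim: "(\<lambda>n. sa_norm sm st (a n * x - 1)) \<longlonglongrightarrow> 0"
    using inv unfolding cstar_invertible_def by blast
  have "eventually (\<lambda>n. sa_norm sm st (a n * x - 1) < 1/2) sequentially"
    by (rule order_tendstoD(2)[OF lim]) simp
  then obtain n where nn: "sa_norm sm st (a n * x - 1) < 1/2" by (auto simp: eventually_sequentially)
  define b where "b = a n"
  define f where "f = b * x - 1"
  obtain c where c: "c > 0" "c < 1/4" "sa_pos st (sm c 1 - st f * f)"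
    using small_norm[OF arch] nn f_def b_def by blast
  have hx: "st x = x" using pos_herm xp by blast
  define u where "u = 1 + f"
  define v where "v = f + f + 1"
  have su: "st u = 1 + st f" unfolding u_def by (simp add: st_add st_1)
  have sv: "st v = st f + st f + 1" unfolding v_def by (simp add: st_add st_1)
  have four: "\<And>w::'a. sm 4 w = w + w + w + w"
  proof -
    fix w :: 'a
    have "sm 4 w = sm (1+1+1+1) w" by simp
    then show "sm 4 w = w + w + w + w" by (simp only: sm_add2 sm_1)
  qed
  have hc: "sm c 1 + (sm c 1 + (sm c 1 + (sm c 1 + sm (1 - c * 4) 1))) = (1::'a)"
  proof -
    have "sm c 1 + (sm c 1 + (sm c 1 + (sm c 1 + sm (1 - c * 4) 1))) = sm (c + (c + (c + (c + (1 - c*4))))) (1::'a)"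
      by (simp only: sm_add2)
    then show ?thesis by (simp add: sm_1)
  qed
  have e: "sm 4 (sm c 1 - st f * f) + sm (1 - 4*c) 1 = 1 - (st f * f + st f * f + st f * f + st f * f)"
    using four[of "sm c 1 - st f * f"] four[of "st f * f"] hc
    by (simp add: sm_diff sm_diff2 sm_mult[symmetric] sm_1 algebra_simps four)
  have eq1: "sm 4 (st u * u) - 1 = st v * v + st v * v + (sm 4 (sm c 1 - st f * f) + sm (1 - 4*c) 1)"
    unfolding e unfolding four su sv by (simp add: u_def v_def algebra_simps)
  have p1: "sa_pos st (sm 4 (st u * u) - 1)"
    unfolding eq1 using pos_add pos_sq pos_sm pos_c c by (simp add: less_imp_le)
  have eq2: "sm (1/4) (sm 4 (st u * u) - 1) = st u * u - sm (1/4) 1"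
    by (simp add: sm_diff sm_mult[symmetric] sm_1)
  have p2: "sa_pos st (st u * u - sm (1/4) 1)" using pos_sm[OF p1, of "1/4"] eq2 by simp
  obtain K where K: "K > 0" "sa_pos st (sm K 1 - st b * b)" using fin_bound[OF arch] by blast
  have ub: "u = b * x" unfolding u_def f_def by simp
  have "sa_pos st (st x * (sm K 1 - st b * b) * x)" using pos_cong K by blast
  moreover have "st x * (sm K 1 - st b * b) * x = sm K (x * x) - st u * u"
  proof -
    have "st x * (sm K 1 - st b * b) * x = x * sm K 1 * x - x * (st b * b) * x"
      by (simp add: hx algebra_simps)
    also have "x * sm K 1 * x = sm K (x * x)" by (metis sm_r sm_ml)
    also have "x * (st b * b) * x = st u * u" by (simp add: ub st_mult hx mult.assoc)
    finally show ?thesis .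
  qed
  ultimately have p3: "sa_pos st (sm K (x * x) - st u * u)" by simp
  have "sa_pos st (sm K (x * x) - sm (1/4) 1)" using pos_add[OF p3 p2] by simp
  moreover have "sm K (x * x) - sm (1/4) 1 = sm K (x * x - sm (1/(4*K)) 1)"
    using K by (simp add: sm_diff sm_mult[symmetric])
  ultimately have p4: "sa_pos st (x * x - sm (1/(4*K)) 1)" using pos_scale_back K by metis
  obtain N where N: "N > 0" "sa_pos st (sm N 1 - st x * x)" using fin_bound[OF arch] by blast
  define L where "L = (N + 1) / 2"
  have L0: "L > 0" using N unfolding L_def by simp
  have "sm 2 (sm L 1 - x) = (sm N 1 - st x * x) + st (x - 1) * (x - 1)"
  proof -
    have a1: "sm 2 (sm L 1) = sm (N+1) (1::'a)" unfolding sm_mult[symmetric] L_def by (rule arg_cong[where f="\<lambda>r. sm r 1"]) simp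
    have a2: "sm 2 x = x + x" using sm_add2[of 1 1 x] sm_1 by (simp add: one_add_one)
    have a3: "sm (N+1) (1::'a) = sm N 1 + 1" using sm_add2 sm_1 by simp
    have a4: "st (x - 1) * (x - 1) = x * x - x - x + 1" by (simp add: hx st_diff st_1 algebra_simps)
    have "sm 2 (sm L 1 - x) = sm N 1 + 1 - (x + x)" by (simp only: sm_diff a1 a2 a3)
    then show ?thesis unfolding a4 by (simp add: hx algebra_simps)
  qed
  then have "sa_pos st (sm 2 (sm L 1 - x))" using pos_add[OF N(2) pos_sq] by simp
  then have pL: "sa_pos st (sm L 1 - x)" using pos_scale_back[of 2] by simp
  have "sa_pos st (x * (sm L 1 - x))" using pos_trick[OF xp pL L0] .
  then have "sa_pos st (x * (sm L 1 - x) + (x * x - sm (1/(4*K)) 1))" using pos_add p4 by blast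
  moreover have "x * (sm L 1 - x) + (x * x - sm (1/(4*K)) 1) = sm L (x - sm (1/(4*K)/L) 1)"
  proof -
    have b1: "x * (sm L 1 - x) + (x * x - sm (1/(4*K)) 1) = x * sm L 1 - sm (1/(4*K)) 1"
      by (simp add: right_diff_distrib)
    have b2: "x * sm L 1 = sm L x" by (rule sm_r[symmetric])
    have b3: "sm L (x - sm (1/(4*K)/L) 1) = sm L x - sm (1/(4*K)) 1"
      using L0 by (simp add: sm_diff sm_mult[symmetric])
    show ?thesis unfolding b1 b2 b3 ..
  qed
  ultimately have "sa_pos st (x - sm (1/(4*K)/L) 1)" using pos_scale_back L0 by metis
  moreover have "1/(4*K)/L > 0" using K L0 by simp
  ultimately show ?thesis by blast
qed


lemma pos_sum: "(\<And>k. k \<in> A \<Longrightarrow> sa_pos st (f k)) \<Longrightarrow> sa_pos st (sum f A)"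
  by (induction A rule: infinite_finite_induct) (auto simp: pos_0 pos_add)

lemma sm_sum: "sm c (sum f A) = sum (\<lambda>k. sm c (f k)) A"
  by (induction A rule: infinite_finite_induct) (auto simp: sm_a0 sm_add)

lemma sum_sm1: "sum (\<lambda>k. sm (g k) w) A = sm (sum g A) w"
  by (induction A rule: infinite_finite_induct) (auto simp: sm_0x sm_add2)

lemma st_pow: "st y = y \<Longrightarrow> st (y^k) = y^k"
  by (induction k) (simp_all add: st_1 st_mult power_commutes)

lemma pow_cong: assumes y: "st y = y" and w: "sa_pos st w" and c: "y * w = w * y"
  shows "sa_pos st (y^(2*j) * w)"
proof -
  have "sa_pos st (st (y^j) * w * y^j)" using pos_cong w by blast
  moreover have "st (y^j) * w * y^j = y^(2*j) * w"
  proof -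
    have cc: "w * y^j = y^j * w" using power_commuting_commutes[OF c, of j] by simp
    have "st (y^j) * w * y^j = y^j * (w * y^j)" using st_pow[OF y, of j] by (simp add: mult.assoc)
    also have "\<dots> = (y^j * y^j) * w" unfolding cc by (simp add: mult.assoc)
    also have "\<dots> = y^(2*j) * w" by (simp add: power_add[symmetric] mult_2)
    finally show ?thesis .
  qed
  ultimately show ?thesis by simp
qed

lemma pow_pos: assumes y: "sa_pos st y" shows "sa_pos st (y^k)"
proof -
  have hy: "st y = y" using pos_herm y by blast
  have k: "k = 2*(k div 2) + k mod 2" by simp
  have "k mod 2 = 0 \<or> k mod 2 = 1" by auto
  then show ?thesis
  proof
    assume "k mod 2 = 0"
    then have "y^k = y^(2*(k div 2)) * 1" using k by simp
    then show ?thesis using pow_cong[OF hy, of 1] pos_c[of 1] sm_1 by simp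
  next
    assume "k mod 2 = 1"
    then have "k = Suc (2*(k div 2))" using k by simp
    then have "y^k = y^(2*(k div 2)) * y" by (metis power_Suc2)
    then show ?thesis using pow_cong[OF hy y] by simp
  qed
qed

lemma pow_le: assumes y: "sa_pos st y" and q: "sa_pos st (sm r 1 - y)" and r: "r > 0"
  shows "sa_pos st (sm (r^k) 1 - y^k)"
proof (induction k)
  case 0
  then show ?case using pos_0 sm_1 by simp
next
  case (Suc k)
  define w where "w = sm r 1 - y"
  have hy: "st y = y" using pos_herm y by blast
  have c: "y * w = w * y" using sm_comm[of r y] by (simp add: w_def algebra_simps)
  have yw: "sa_pos st (y * w)" using pos_trick[OF y q r] w_def by simp
  have c2: "y * (y * w) = (y * w) * y" using c by (metis mult.assoc)
  have k: "k = 2*(k div 2) + k mod 2" by simp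
  have A: "sa_pos st (y^k * w)"
  proof -
    have "k mod 2 = 0 \<or> k mod 2 = 1" by auto
    then show ?thesis
    proof
      assume "k mod 2 = 0"
      then have "y^k = y^(2*(k div 2))" using k by simp
      then show ?thesis using pow_cong[OF hy _ c] q w_def by simp
    next
      assume "k mod 2 = 1"
      then have "k = Suc (2*(k div 2))" using k by simp
      then have "y^k * w = y^(2*(k div 2)) * (y * w)" by (metis power_Suc2 mult.assoc)
      then show ?thesis using pow_cong[OF hy yw c2] by simp
    qed
  qed
  have B: "sa_pos st (sm r (sm (r^k) 1 - y^k))" using pos_sm Suc r by simp
  have "sm r (sm (r^k) 1 - y^k) + y^k * w = sm (r^Suc k) 1 - y^Suc k"
  proof -
    have "y^k * w = sm r (y^k) - y^Suc k" by (simp add: w_def right_diff_distrib power_Suc2 sm_r[symmetric] power_commutes)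
    then show ?thesis by (simp add: sm_diff sm_mult[symmetric] mult.commute)
  qed
  then show ?case using pos_add[OF B A] by simp
qed

lemma upper: assumes arch: "sa_archimedean sm st" and xp: "sa_pos st x"
  shows "\<exists>L>0. sa_pos st (sm L 1 - x)"
proof -
  have hx: "st x = x" using pos_herm xp by blast
  obtain N where N: "N > 0" "sa_pos st (sm N 1 - st x * x)" using fin_bound[OF arch] by blast
  define L where "L = (N + 1) / 2"
  have L0: "L > 0" using N unfolding L_def by simp
  have "sm 2 (sm L 1 - x) = (sm N 1 - st x * x) + st (x - 1) * (x - 1)"
  proof -
    have a1: "sm 2 (sm L 1) = sm (N+1) (1::'a)" unfolding sm_mult[symmetric] L_def by (rule arg_cong[where f="\<lambda>r. sm r 1"]) simp
    have a2: "sm 2 x = x + x" using sm_add2[of 1 1 x] sm_1 by (simp add: one_add_one)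
    have a3: "sm (N+1) (1::'a) = sm N 1 + 1" using sm_add2 sm_1 by simp
    have a4: "st (x - 1) * (x - 1) = x * x - x - x + 1" by (simp add: hx st_diff st_1 algebra_simps)
    have "sm 2 (sm L 1 - x) = sm N 1 + 1 - (x + x)" by (simp only: sm_diff a1 a2 a3)
    then show ?thesis unfolding a4 by (simp add: hx algebra_simps)
  qed
  then have "sa_pos st (sm 2 (sm L 1 - x))" using pos_add[OF N(2) pos_sq] by simp
  then have pL: "sa_pos st (sm L 1 - x)" using pos_scale_back[of 2] by simp
  then show ?thesis using L0 by blast
qed

lemma telesc: "(1 - (y::'a)) * (\<Sum>k<n. y^k) = 1 - y^n \<and> (\<Sum>k<n. y^k) * (1 - y) = 1 - y^n"
proof (induction n)
  case 0
  then show ?case by simp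
next
  case (Suc n)
  have a: "(1 - y) * (\<Sum>k<Suc n. y^k) = (1 - y) * (\<Sum>k<n. y^k) + (1 - y) * y^n"
    by (simp add: distrib_left)
  have b: "(\<Sum>k<Suc n. y^k) * (1 - y) = (\<Sum>k<n. y^k) * (1 - y) + y^n * (1 - y)"
    by (simp add: distrib_right)
  have c: "(1 - y) * y^n = y^n - y^Suc n" by (simp add: left_diff_distrib)
  have d: "y^n * (1 - y) = y^n - y^Suc n" by (simp add: right_diff_distrib power_Suc2 power_commutes)
  show ?case unfolding a b c d using Suc by simp
qed


lemma geom0: "(\<Sum>k\<in>{n..<n+d}. (r::rat)^k) * (1 - r) = r^n - r^(n+d)"
proof (induction d)
  case 0
  then show ?case by simp
next
  case (Suc d)
  have a: "(\<Sum>k\<in>{n..<n+Suc d}. r^k) = (\<Sum>k\<in>{n..<n+d}. r^k) + r^(n+d)" by simp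
  have b: "r^(n+d) * (1 - r) = r^(n+d) - r^(n + Suc d)" by (simp add: algebra_simps)
  show ?case unfolding a distrib_right Suc b by simp
qed

lemma geom: "n \<le> m \<Longrightarrow> (\<Sum>k\<in>{n..<m}. (r::rat)^k) * (1 - r) = r^n - r^m"
  using geom0[where n=n and d="m - n" and r=r] by simp

lemma bwd: assumes arch: "sa_archimedean sm st" and xp: "sa_pos st x"
  and al: "\<alpha> > 0" and xa: "sa_pos st (x - sm \<alpha> 1)"
  shows "cstar_invertible sm st x"
proof -
  have hx: "st x = x" using pos_herm xp by blast
  obtain L0 where L0: "L0 > 0" "sa_pos st (sm L0 1 - x)" using upper[OF arch xp] by blast
  define L where "L = L0 + \<alpha>"
  have L: "L > 0" "\<alpha> < L" using L0 al by (auto simp: L_def)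
  have eqL: "sm L 1 - x = (sm L0 1 - x) + sm \<alpha> 1" by (simp add: L_def sm_add2 algebra_simps)
  have pL: "sa_pos st (sm L 1 - x)" unfolding eqL using pos_add[OF L0(2) pos_c[of \<alpha>]] al by simp
  define y where "y = sm (1/L) (sm L 1 - x)"
  have yp: "sa_pos st y" unfolding y_def using pos_sm pL L by simp
  define r where "r = 1 - \<alpha>/L"
  have r: "r > 0" "r < 1" using L al by (auto simp: r_def)
  have smL: "\<And>w. sm L (sm (1/L) w) = w" using L by (simp add: sm_mult[symmetric] sm_1)
  have smL': "\<And>w. sm (1/L) (sm L w) = w" using L by (simp add: sm_mult[symmetric] sm_1)
  have "sm r 1 - y = sm (1/L) (x - sm \<alpha> 1)"
  proof -
    have "sm r 1 = 1 - sm (1/L) (sm \<alpha> 1)" using L by (simp add: r_def sm_diff2 sm_1 sm_mult[symmetric])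
    moreover have "y = 1 - sm (1/L) x" unfolding y_def sm_diff smL' sm_1 ..
    ultimately show ?thesis by (simp add: sm_diff)
  qed
  then have rp: "sa_pos st (sm r 1 - y)" using pos_sm[OF xa] L by simp
  have xy: "x = sm L (1 - y)" unfolding y_def sm_diff smL by simp
  define S where "S n = (\<Sum>k<n. y^k)" for n
  define a where "a n = sm (1/L) (S n)" for n
  have xan: "x * a n - 1 = - (y^n)" for n
  proof -
    have "x * a n = (1 - y) * S n" unfolding xy a_def sm_ml[symmetric] sm_mr[symmetric] smL smL' ..
    then show ?thesis using telesc[of y n] S_def by simp
  qed
  have anx: "a n * x - 1 = - (y^n)" for n
  proof -
    have "a n * x = S n * (1 - y)" unfolding xy a_def sm_ml[symmetric] sm_mr[symmetric] smL smL' ..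
    then show ?thesis using telesc[of y n] S_def by simp
  qed
  have bnd: "sa_norm sm st (y^n) \<le> real_of_rat r ^ n" for n
    using norm_pos_bound[OF pow_pos[OF yp] _ pow_le[OF yp rp r(1)], of n] r by (simp add: of_rat_power)
  have lim0: "(\<lambda>n. real_of_rat r ^ n) \<longlonglongrightarrow> 0"
    by (rule LIMSEQ_power_zero) (use r in \<open>simp add: zero_less_of_rat_iff of_rat_less_1_iff\<close>)
  have ny: "(\<lambda>n. sa_norm sm st (y^n)) \<longlonglongrightarrow> 0"
    by (rule real_tendsto_sandwich[where f="\<lambda>n. 0" and h="\<lambda>n. real_of_rat r ^ n"])
       (use bnd norm_ge0 lim0 in auto)
  have n0: "sa_norm sm st 0 = 0"
  proof -
    have b0: "sa_norm sm st 0 \<le> real_of_rat r ^ n" for n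
      using norm_pos_bound[OF pos_0, of "r^n"] pos_c[of "r^n"] r by (simp add: of_rat_power)
    have "(\<lambda>n. sa_norm sm st (0::'a)) \<longlonglongrightarrow> 0"
      by (rule real_tendsto_sandwich[where f="\<lambda>n. 0" and h="\<lambda>n. real_of_rat r ^ n"])
         (use b0 norm_ge0 lim0 in auto)
    then show ?thesis by (simp add: LIMSEQ_const_iff)
  qed
  have diffb: "sa_norm sm st (a m - a n) \<le> real_of_rat r ^ n / real_of_rat \<alpha>" if nm: "n \<le> m" for m n
  proof -
    define T where "T = (\<Sum>k\<in>{n..<m}. y^k)"
    define R where "R = (\<Sum>k\<in>{n..<m}. r^k)"
    have "S m = S n + T" unfolding S_def T_def atLeast0LessThan[symmetric]
      using sum.atLeastLessThan_concat[of 0 n m "\<lambda>k. y^k", symmetric] nm by simp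
    then have d: "a m - a n = sm (1/L) T" unfolding a_def by (simp add: sm_add)
    have pT: "sa_pos st T" unfolding T_def by (rule pos_sum) (rule pow_pos[OF yp])
    have "sm R 1 - T = (\<Sum>k\<in>{n..<m}. sm (r^k) 1 - y^k)"
      unfolding R_def T_def sum_subtractf sum_sm1 ..
    then have pRT: "sa_pos st (sm R 1 - T)" using pos_sum[of "{n..<m}" "\<lambda>k. sm (r^k) 1 - y^k"]
      pow_le[OF yp rp r(1)] by simp
    have "R * (1 - r) = r^n - r^m" unfolding R_def using geom[OF nm] .
    moreover have "r^m \<ge> 0" using r by simp
    ultimately have "R * (1 - r) \<le> r^n" by simp
    moreover have "L * (1 - r) = \<alpha>" using L by (simp add: r_def field_simps)
    ultimately have R1: "R * (1 - r) \<le> r^n" and La: "L * (1 - r) = \<alpha>" by blast+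
    have h1: "R \<le> r^n / (1-r)" using R1 r by (simp add: le_divide_eq)
    have "1/L * R \<le> 1/L * (r^n / (1-r))" using L by (intro mult_left_mono h1) auto
    also have "1/L * (r^n / (1-r)) = r^n / (L * (1 - r))" by simp
    finally have Rle: "1/L * R \<le> r^n / \<alpha>" unfolding La .
    define \<rho> where "\<rho> = r^n / \<alpha>"
    have \<rho>: "\<rho> > 0" using r al by (simp add: \<rho>_def)
    have "sm \<rho> 1 - sm (1/L) T = sm (1/L) (sm R 1 - T) + sm (\<rho> - 1/L * R) 1"
      by (simp add: sm_diff sm_diff2 sm_mult[symmetric])
    moreover have "sa_pos st (sm (1/L) (sm R 1 - T) + sm (\<rho> - 1/L * R) 1)"
      using pos_add[OF pos_sm[OF pRT] pos_c] L Rle \<rho>_def by simp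
    ultimately have "sa_pos st (sm \<rho> 1 - (a m - a n))" using d by simp
    moreover have "sa_pos st (a m - a n)" unfolding d using pos_sm[OF pT] L by simp
    ultimately have "sa_norm sm st (a m - a n) \<le> real_of_rat \<rho>" using norm_pos_bound \<rho> by blast
    then show ?thesis by (simp add: \<rho>_def of_rat_divide of_rat_power)
  qed
  have cauchy: "sa_cauchy sm st a"
    unfolding sa_cauchy_def
  proof (intro allI impI)
    fix e :: real assume e: "e > 0"
    have "(\<lambda>n. real_of_rat r ^ n / real_of_rat \<alpha>) \<longlonglongrightarrow> 0"
      using tendsto_divide_zero[OF lim0] by blast
    then have "eventually (\<lambda>n. real_of_rat r ^ n / real_of_rat \<alpha> < e) sequentially"
      using order_tendstoD(2) e by blast
    then obtain N where N: "real_of_rat r ^ N / real_of_rat \<alpha> < e"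
      by (auto simp: eventually_sequentially)
    have mono: "real_of_rat r ^ n / real_of_rat \<alpha> \<le> real_of_rat r ^ N / real_of_rat \<alpha>" if "N \<le> n" for n
    proof -
      have "real_of_rat r ^ n \<le> real_of_rat r ^ N"
        by (rule power_decreasing) (use that r in \<open>auto simp: zero_le_of_rat_iff of_rat_less_1_iff less_imp_le\<close>)
      then show ?thesis using al by (simp add: divide_right_mono zero_le_of_rat_iff)
    qed
    show "\<exists>N. \<forall>m\<ge>N. \<forall>n\<ge>N. sa_norm sm st (a m - a n) < e"
    proof (intro exI allI impI)
      fix m n assume mN: "N \<le> m" and nN: "N \<le> n"
      show "sa_norm sm st (a m - a n) < e"
      proof (cases "n \<le> m")
        case True
        then show ?thesis using diffb[OF True] mono[OF nN] N by linarith
      next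
        case False
        then have "sa_norm sm st (a n - a m) \<le> real_of_rat r ^ m / real_of_rat \<alpha>" using diffb by simp
        moreover have "a m - a n = - (a n - a m)" by simp
        ultimately show ?thesis using norm_neg mono[OF mN] N by (metis order.trans order_le_less_trans)
      qed
    qed
  qed
  have c0: "sa_cauchy sm st (\<lambda>n. 0)" unfolding sa_cauchy_def using n0 by auto
  show ?thesis unfolding cstar_invertible_def
  proof (intro exI conjI)
    show "sa_cauchy sm st a" by (rule cauchy)
    show "sa_cauchy sm st (\<lambda>n. 0)" by (rule c0)
    show "(\<lambda>n. sa_norm sm st (x * a n - 1)) \<longlonglongrightarrow> 0" unfolding xan norm_neg by (rule ny)
    show "(\<lambda>n. sa_norm sm st (a n * x - 1)) \<longlonglongrightarrow> 0" unfolding anx norm_neg by (rule ny)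
    show "(\<lambda>n. sa_norm sm st (x * 0)) \<longlonglongrightarrow> 0" using n0 by simp
    show "(\<lambda>n. sa_norm sm st (0 * x)) \<longlonglongrightarrow> 0" using n0 by simp
  qed
qed

end

theorem proposition2p9:
  fixes sm :: "rat \<Rightarrow> 'a::ring_1 \<Rightarrow> 'a" and st :: "'a \<Rightarrow> 'a" and x :: 'a
  assumes "star_alg sm st"
    and "sa_archimedean sm st"
    and "sa_pos st x"
  shows "cstar_invertible sm st x \<longleftrightarrow> (\<exists>\<alpha>::rat. \<alpha> > 0 \<and> sa_pos st (x - sm \<alpha> 1))"
  using fwd[OF assms(1,2,3)] bwd[OF assms(1,2,3)] by blast

end
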